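(* Let $T,S\in\mathcal{B}_A(\mathcal{H})$. Then $$\omega_A(TS)\le \tfrac12\,\omega_A(ST)+\tfrac14\Big(\|T\|_A\|S\|_A+\|TS\|_A\Big).$$
   Context: $\mathcal{H}$ is a complex Hilbert space with inner product $\langle\cdot,\cdot\rangle$, and $A$ is a fixed nonzero positive bounded operator on $\mathcal{H}$. Set $\langle x,y\rangle_A=\langle Ax,y\rangle$ and $\|x\|_A=\|A^{1/2}x\|$. $\mathcal{B}_A(\mathcal{H})$ is the set of bounded operators $T$ for which there exists a bounded $S$ with $\langle Tx,y\rangle_A=\langle x,Sy\rangle_A$ for all $x,y$ (equivalently $\mathcal{R}(T^*A)\subseteq\mathcal{R}(A)$). For an operator $T$ with $\|Tx\|_A\le\lambda\|x\|_A$ for some $\lambda>0$ and all $x$, $\|T\|_A=\sup\{\|Tx\|_A: \|x\|_A=1\}$, and $\omega_A(T)=\sup\{|\langle Tx,x\rangle_A|:\|x\|_A=1\}$ is the $A$-numerical radius. *)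

theory Defs
  imports "HOL-Analysis.Analysis"
begin

text \<open>The inner product is linear in the FIRST argument
and conjugate-linear in the second, following the paper.\<close>

class complex_inner = real_normed_vector +
  fixes scaleC :: "complex \<Rightarrow> 'a \<Rightarrow> 'a" (infixr \<open>*\<^sub>C\<close> 75)
    and cinner :: "'a \<Rightarrow> 'a \<Rightarrow> complex"
  assumes scaleC_add_right: "a *\<^sub>C (x + y) = a *\<^sub>C x + a *\<^sub>C y"
    and scaleC_add_left: "(a + b) *\<^sub>C x = a *\<^sub>C x + b *\<^sub>C x"
    and scaleC_scaleC: "a *\<^sub>C (b *\<^sub>C x) = (a * b) *\<^sub>C x"
    and scaleC_one: "1 *\<^sub>C x = x"
    and scaleR_scaleC: "scaleR r x = complex_of_real r *\<^sub>C x"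
    and cinner_commute: "cinner x y = cnj (cinner y x)"
    and cinner_add_left: "cinner (x + y) z = cinner x z + cinner y z"
    and cinner_scaleC_left: "cinner (a *\<^sub>C x) y = a * cinner x y"
    and cinner_eq_zero_iff: "cinner x x = 0 \<longleftrightarrow> x = 0"
    and norm_eq_sqrt_cinner: "norm x = sqrt (Re (cinner x x))"

class chilbert = complex_inner + complete_space

instantiation complex :: chilbert
begin
definition scaleC_complex :: "complex \<Rightarrow> complex \<Rightarrow> complex" where
  "scaleC_complex a x = a * x"
definition cinner_complex :: "complex \<Rightarrow> complex \<Rightarrow> complex" where
  "cinner_complex x y = x * cnj y"
instance
proof
  fix a b x y z :: complex and r :: real
  show "a *\<^sub>C (x + y) = a *\<^sub>C x + a *\<^sub>C y" by (simp add: scaleC_complex_def algebra_simps)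
  show "(a + b) *\<^sub>C x = a *\<^sub>C x + b *\<^sub>C x" by (simp add: scaleC_complex_def algebra_simps)
  show "a *\<^sub>C (b *\<^sub>C x) = (a * b) *\<^sub>C x" by (simp add: scaleC_complex_def)
  show "1 *\<^sub>C x = x" by (simp add: scaleC_complex_def)
  show "scaleR r x = complex_of_real r *\<^sub>C x" by (simp add: scaleC_complex_def scaleR_conv_of_real)
  show "cinner x y = cnj (cinner y x)" by (simp add: cinner_complex_def)
  show "cinner (x + y) z = cinner x z + cinner y z" by (simp add: cinner_complex_def algebra_simps)
  show "cinner (a *\<^sub>C x) y = a * cinner x y" by (simp add: cinner_complex_def scaleC_complex_def)
  show "cinner x x = 0 \<longleftrightarrow> x = 0" by (simp add: cinner_complex_def)
  show "norm x = sqrt (Re (cinner x x))"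
    by (simp add: cinner_complex_def complex_mult_cnj cmod_def power2_eq_square)
qed
end

definition bounded_clinear_op :: "('a::complex_inner \<Rightarrow> 'a) \<Rightarrow> bool" where
  "bounded_clinear_op T \<longleftrightarrow>
     (\<forall>x y. T (x + y) = T x + T y) \<and> (\<forall>c x. T (c *\<^sub>C x) = c *\<^sub>C T x) \<and>
     (\<exists>K. \<forall>x. norm (T x) \<le> norm x * K)"

definition positive_op :: "('a::complex_inner \<Rightarrow> 'a) \<Rightarrow> bool" where
  "positive_op A \<longleftrightarrow> bounded_clinear_op A \<and>
     (\<forall>x. Im (cinner (A x) x) = 0 \<and> Re (cinner (A x) x) \<ge> 0)"

definition normA :: "('a::complex_inner \<Rightarrow> 'a) \<Rightarrow> 'a \<Rightarrow> real" where
  "normA A x = sqrt (Re (cinner (A x) x))"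

definition BA :: "('a::complex_inner \<Rightarrow> 'a) \<Rightarrow> ('a \<Rightarrow> 'a) set" where
  "BA A = {T. bounded_clinear_op T \<and>
     (\<exists>S. bounded_clinear_op S \<and> (\<forall>x y. cinner (A (T x)) y = cinner (A x) (S y)))}"

definition opnormA :: "('a::complex_inner \<Rightarrow> 'a) \<Rightarrow> ('a \<Rightarrow> 'a) \<Rightarrow> real" where
  "opnormA A T = Sup {normA A (T x) | x. normA A x = 1}"

definition omegaA :: "('a::complex_inner \<Rightarrow> 'a) \<Rightarrow> ('a \<Rightarrow> 'a) \<Rightarrow> real" where
  "omegaA A T = Sup {cmod (cinner (A (T x)) x) | x. normA A x = 1}"

end

theory Submission
  imports Defs
begin


lemma cinner_add_right: "cinner (x::'a::complex_inner) (y + z) = cinner x y + cinner x z"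
  by (metis cinner_commute cinner_add_left complex_cnj_add)
lemma cinner_scaleC_right: "cinner (x::'a::complex_inner) (a *\<^sub>C y) = cnj a * cinner x y"
  by (metis cinner_commute cinner_scaleC_left complex_cnj_mult)
lemma cinner_diff_left: "cinner ((x::'a::complex_inner) - y) z = cinner x z - cinner y z"
  using cinner_add_left[of "x - y" y z] by (simp add: eq_diff_eq)
lemma cinner_diff_right: "cinner (x::'a::complex_inner) (y - z) = cinner x y - cinner x z"
  using cinner_add_right[of x "y - z" z] by (simp add: eq_diff_eq)
lemma cinner_self_Re_nonneg: "Re (cinner (x::'a::complex_inner) x) \<ge> 0"
  by (metis norm_eq_sqrt_cinner norm_ge_zero real_sqrt_lt_0_iff not_le)
lemma cinner_self_Im: "Im (cinner (x::'a::complex_inner) x) = 0"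
  by (metis cinner_commute cnj.sel(2) equation_minus_iff neg_equal_zero)
lemma scaleC_minus: "(-1) *\<^sub>C (x::'a::complex_inner) = - x"
proof -
  have "(-1::real) *\<^sub>R x = - x" by simp
  then show ?thesis using scaleR_scaleC[of "-1" x] by simp
qed

lemma bco_add: "bounded_clinear_op T \<Longrightarrow> T (x + y) = T x + T y"
  by (simp add: bounded_clinear_op_def)
lemma bco_scale: "bounded_clinear_op T \<Longrightarrow> T (c *\<^sub>C x) = c *\<^sub>C T x"
  by (simp add: bounded_clinear_op_def)
lemma bco_zero: "bounded_clinear_op T \<Longrightarrow> T 0 = 0"
  by (metis add_cancel_left_left add_0 bco_add)
lemma bco_minus: "bounded_clinear_op T \<Longrightarrow> T (- x) = - T x"
  by (metis bco_scale scaleC_minus)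
lemma bco_diff: "bounded_clinear_op T \<Longrightarrow> T (x - y) = T x - T y"
  by (metis bco_add bco_minus diff_conv_add_uminus)
lemma bco_bound: "bounded_clinear_op (T::'a::complex_inner\<Rightarrow>'a) \<Longrightarrow> \<exists>K>0. \<forall>x. norm (T x) \<le> K * norm x"
proof -
  assume "bounded_clinear_op T"
  then obtain K where K: "\<forall>x. norm (T x) \<le> norm x * K" by (auto simp: bounded_clinear_op_def)
  have "\<forall>x. norm (T x) \<le> (max K 1) * norm x"
  proof
    fix x :: 'a
    have "norm x * K \<le> norm x * max K 1" by (simp add: mult_left_mono)
    then show "norm (T x) \<le> (max K 1) * norm x" using K by (metis mult.commute order_trans)
  qed
  then show ?thesis by (metis max.strict_coboundedI2 zero_less_one)
qed
lemma bco_comp: "bounded_clinear_op (T::'a::complex_inner\<Rightarrow>'a) \<Longrightarrow> bounded_clinear_op S \<Longrightarrow> bounded_clinear_op (\<lambda>x. T (S x))"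
proof -
  assume T: "bounded_clinear_op T" and S: "bounded_clinear_op S"
  obtain K1 where K1: "K1 > 0" "\<forall>x. norm (T x) \<le> K1 * norm x" using bco_bound[OF T] by auto
  obtain K2 where K2: "K2 > 0" "\<forall>x. norm (S x) \<le> K2 * norm x" using bco_bound[OF S] by auto
  have "\<forall>x. norm (T (S x)) \<le> norm x * (K1 * K2)"
  proof
    fix x :: 'a
    have "norm (T (S x)) \<le> K1 * norm (S x)" using K1 by auto
    also have "\<dots> \<le> K1 * (K2 * norm x)" using K1 K2 by (simp add: mult_left_mono)
    finally show "norm (T (S x)) \<le> norm x * (K1 * K2)" by (simp add: algebra_simps)
  qed
  moreover have "\<forall>x y. T (S (x+y)) = T (S x) + T (S y)" by (simp add: bco_add[OF S] bco_add[OF T])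
  moreover have "\<forall>c x. T (S (c *\<^sub>C x)) = c *\<^sub>C T (S x)" by (simp add: bco_scale[OF S] bco_scale[OF T])
  ultimately show ?thesis unfolding bounded_clinear_op_def by blast
qed
lemma bco_comp': "bounded_clinear_op T \<Longrightarrow> bounded_clinear_op S \<Longrightarrow> bounded_clinear_op (T \<circ> S)"
  using bco_comp[of T S] by (simp add: comp_def)
lemma bco_id: "bounded_clinear_op (\<lambda>x. x)"
  unfolding bounded_clinear_op_def by (metis mult.right_neutral order_refl)
lemma positive_id: "positive_op (\<lambda>x::'a::complex_inner. x)"
  unfolding positive_op_def using bco_id cinner_self_Im cinner_self_Re_nonneg by auto

lemma pA_bco: "positive_op A \<Longrightarrow> bounded_clinear_op A" by (simp add: positive_op_def)
lemma pA_Im: "positive_op A \<Longrightarrow> Im (cinner (A x) x) = 0" by (simp add: positive_op_def)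
lemma pA_Re: "positive_op A \<Longrightarrow> Re (cinner (A x) x) \<ge> 0" by (simp add: positive_op_def)

lemma pA_commute:
  assumes P: "positive_op A"
  shows "cinner (A y) x = cnj (cinner (A x) y)"
proof -
  have B: "bounded_clinear_op A" using P by (simp add: positive_op_def)
  define a where "a = cinner (A x) y"
  define b where "b = cinner (A y) x"
  have e1: "cinner (A (x + y)) (x + y) = cinner (A x) x + a + b + cinner (A y) y"
    by (simp add: bco_add[OF B] cinner_add_left cinner_add_right a_def b_def)
  have e2: "cinner (A (x + \<i> *\<^sub>C y)) (x + \<i> *\<^sub>C y) = cinner (A x) x - \<i> * a + \<i> * b + cinner (A y) y"
    by (simp add: bco_add[OF B] bco_scale[OF B] cinner_add_left cinner_add_right cinner_scaleC_left
        cinner_scaleC_right a_def b_def algebra_simps)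
  have i1: "Im a + Im b = 0" using e1 pA_Im[OF P, of "x+y"] pA_Im[OF P, of x] pA_Im[OF P, of y] by simp
  have i2: "Re b - Re a = 0" using e2 pA_Im[OF P, of "x+ \<i> *\<^sub>C y"] pA_Im[OF P, of x] pA_Im[OF P, of y] by simp
  show ?thesis unfolding b_def[symmetric] a_def[symmetric] using i1 i2
    by (simp add: complex_eq_iff)
qed

lemma normA_sq: "positive_op A \<Longrightarrow> (normA A x)\<^sup>2 = Re (cinner (A x) x)"
  by (simp add: normA_def pA_Re)
lemma normA_nonneg: "positive_op A \<Longrightarrow> normA A x \<ge> 0" by (simp add: normA_def pA_Re)
lemma cinner_self_normA: "positive_op A \<Longrightarrow> cinner (A x) x = complex_of_real ((normA A x)\<^sup>2)"
  by (simp add: normA_sq complex_eq_iff pA_Im)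

lemma ip_add_left: "positive_op A \<Longrightarrow> cinner (A (x + y)) z = cinner (A x) z + cinner (A y) z"
  by (simp add: bco_add[OF pA_bco] cinner_add_left)
lemma ip_scale_left: "positive_op A \<Longrightarrow> cinner (A (c *\<^sub>C x)) z = c * cinner (A x) z"
  by (simp add: bco_scale[OF pA_bco] cinner_scaleC_left)
lemma ip_diff_left: "positive_op A \<Longrightarrow> cinner (A (x - y)) z = cinner (A x) z - cinner (A y) z"
  by (simp add: bco_diff[OF pA_bco] cinner_diff_left)

lemma discr:
  fixes a b d :: real
  assumes H: "\<forall>r. 0 \<le> a - 2*r*b + r^2*b*d" and "b \<ge> 0" "a \<ge> 0" "d \<ge> 0"
  shows "b \<le> a * d"
proof (cases "b = 0")
  case True then show ?thesis using assms by simp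
next
  case False
  then have bp: "b > 0" using assms by simp
  show ?thesis
  proof (cases "d = 0")
    case True
    have "0 \<le> a - 2*((a+1)/(2*b))*b + ((a+1)/(2*b))^2*b*d" using H by blast
    then have "0 \<le> a - (a+1)" using True bp by simp
    then show ?thesis by simp
  next
    case False
    then have dp: "d > 0" using assms by simp
    have "0 \<le> a - 2*(1/d)*b + (1/d)^2*b*d" using H by blast
    also have "a - 2*(1/d)*b + (1/d)^2*b*d = a - b/d" using dp by (simp add: power2_eq_square field_simps)
    finally have "b/d \<le> a" by simp
    then show ?thesis using dp by (simp add: divide_le_eq mult.commute)
  qed
qed

lemma CS:
  assumes P: "positive_op A"
  shows "cmod (cinner (A x) y) \<le> normA A x * normA A y"
proof -
  define c where "c = cinner (A x) y"
  define a where "a = Re (cinner (A x) x)"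
  define d where "d = Re (cinner (A y) y)"
  define b where "b = (cmod c)^2"
  have ax: "cinner (A x) x = complex_of_real a" unfolding a_def using pA_Im[OF P, of x] by (simp add: complex_eq_iff)
  have dy: "cinner (A y) y = complex_of_real d" unfolding d_def using pA_Im[OF P, of y] by (simp add: complex_eq_iff)
  have yx: "cinner (A y) x = cnj c" unfolding c_def by (rule pA_commute[OF P])
  have cc: "c * cnj c = complex_of_real b" unfolding b_def by (rule complex_norm_square[symmetric])
  have key: "\<forall>r. 0 \<le> a - 2*r*b + r^2*b*d"
  proof
    fix r :: real
    define l where "l = complex_of_real r * c"
    have "cinner (A (x - l *\<^sub>C y)) (x - l *\<^sub>C y) =
        cinner (A x) x - cnj l * c - l * cinner (A y) x + l * cnj l * cinner (A y) y"
      by (simp add: bco_diff[OF pA_bco[OF P]] bco_scale[OF pA_bco[OF P]] cinner_diff_left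
          cinner_diff_right cinner_scaleC_left cinner_scaleC_right c_def algebra_simps)
    also have "\<dots> = complex_of_real a - complex_of_real r * (c * cnj c) - complex_of_real r * (c * cnj c)
        + complex_of_real (r^2) * (c * cnj c) * complex_of_real d"
      by (simp add: ax dy yx l_def power2_eq_square algebra_simps)
    also have "\<dots> = complex_of_real (a - 2*r*b + r^2*b*d)" by (simp add: cc)
    finally have "Re (cinner (A (x - l *\<^sub>C y)) (x - l *\<^sub>C y)) = a - 2*r*b + r^2*b*d" by simp
    then show "0 \<le> a - 2*r*b + r^2*b*d" using pA_Re[OF P] by metis
  qed
  have "b \<le> a * d" by (rule discr[OF key]) (auto simp: b_def a_def d_def pA_Re[OF P])
  then have "sqrt b \<le> sqrt (a * d)" by simp
  moreover have "sqrt b = cmod c" by (simp add: b_def)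
  moreover have "sqrt (a * d) = normA A x * normA A y" by (simp add: normA_def a_def d_def real_sqrt_mult)
  ultimately show ?thesis by (simp add: c_def)
qed

lemma cinner_CS: "cmod (cinner (x::'a::complex_inner) y) \<le> norm x * norm y"
  using CS[OF positive_id, of x y] by (simp add: normA_def norm_eq_sqrt_cinner)



lemma growth:
  fixes q :: "nat \<Rightarrow> real" and K C :: real
  assumes q0: "q 0 > 0" and qn: "\<forall>k. q k \<ge> 0"
    and lc: "\<forall>k. (q (Suc k))^2 \<le> q k * q (Suc (Suc k))"
    and K: "K > 0" and bd: "\<forall>k. q k \<le> C * K^k"
  shows "q 1 \<le> K * q 0"
proof (rule ccontr)
  assume "\<not> q 1 \<le> K * q 0"
  then have q1: "q 1 > K * q 0" by simp
  define \<rho> where "\<rho> = q 1 / q 0"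
  have rK: "\<rho> > K" unfolding \<rho>_def using q0 q1 by (simp add: less_divide_eq)
  have H: "q k > 0 \<and> q (Suc k) \<ge> \<rho> * q k" for k
  proof (induction k)
    case 0
    then show ?case using q0 by (simp add: \<rho>_def)
  next
    case (Suc k)
    then have a: "q k > 0" and b: "q (Suc k) \<ge> \<rho> * q k" by auto
    have "\<rho> > 0" using rK K by simp
    then have "\<rho> * q k > 0" using a by simp
    then have pos: "q (Suc k) > 0" using b by linarith
    have "q (Suc k) * (\<rho> * q k) \<le> q (Suc k) * q (Suc k)"
      using b pos by (simp add: mult_left_mono)
    also have "\<dots> \<le> q k * q (Suc (Suc k))" using lc by (simp add: power2_eq_square)
    finally have "q k * (\<rho> * q (Suc k)) \<le> q k * q (Suc (Suc k))" by (simp add: algebra_simps)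
    then have "\<rho> * q (Suc k) \<le> q (Suc (Suc k))" using a by (simp add: mult_le_cancel_left_pos)
    then show ?case using pos by simp
  qed
  have G: "q k \<ge> q 0 * \<rho>^k" for k
  proof (induction k)
    case 0 then show ?case by simp
  next
    case (Suc k)
    have "q 0 * \<rho>^Suc k = \<rho> * (q 0 * \<rho>^k)" by simp
    also have "\<dots> \<le> \<rho> * q k" using Suc rK K by (simp add: mult_left_mono)
    also have "\<dots> \<le> q (Suc k)" using H by blast
    finally show ?case .
  qed
  have "1 < \<rho> / K" using rK K by simp
  then obtain n where n: "C / q 0 < (\<rho> / K)^n" using real_arch_pow by blast
  have "q 0 * \<rho>^n \<le> C * K^n" using G[of n] bd by (meson order_trans)
  then have "\<rho>^n / K^n \<le> C / q 0" using q0 K by (simp add: field_simps)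
  then show False using n by (simp add: power_divide)
qed

lemma BA_adj:
  assumes "T \<in> BA A"
  obtains T' where "bounded_clinear_op T" "bounded_clinear_op T'"
    "\<And>x y. cinner (A (T x)) y = cinner (A x) (T' y)"
  using assms unfolding BA_def by auto

definition abdd :: "('a::complex_inner \<Rightarrow> 'a) \<Rightarrow> ('a \<Rightarrow> 'a) \<Rightarrow> bool" where
  "abdd A T \<longleftrightarrow> (\<exists>K\<ge>0. \<forall>x. normA A (T x) \<le> K * normA A x)"

lemma normA_le_norm:
  assumes P: "positive_op A"
  shows "\<exists>C\<ge>0. \<forall>y. normA A y \<le> C * norm y"
proof -
  obtain KA where KA: "KA > 0" "\<forall>x. norm (A x) \<le> KA * norm x" using bco_bound[OF pA_bco[OF P]] by blast
  have "normA A y \<le> sqrt KA * norm y" for y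
  proof -
    have "(normA A y)^2 = Re (cinner (A y) y)" by (rule normA_sq[OF P])
    also have "\<dots> \<le> cmod (cinner (A y) y)" by (rule complex_Re_le_cmod)
    also have "\<dots> \<le> norm (A y) * norm y" by (rule cinner_CS)
    also have "\<dots> \<le> KA * norm y * norm y" using KA by (simp add: mult_right_mono)
    also have "\<dots> = (sqrt KA * norm y)^2" using KA by (simp add: power2_eq_square)
    finally show ?thesis using KA by (meson power2_le_imp_le mult_nonneg_nonneg norm_ge_zero real_sqrt_ge_zero less_imp_le)
  qed
  then show ?thesis using KA by (meson less_imp_le real_sqrt_ge_zero)
qed

lemma Abound:
  assumes P: "positive_op A" and T: "T \<in> BA A"
  shows "abdd A T"
proof -
  obtain T' where bT: "bounded_clinear_op T" and bT': "bounded_clinear_op T'"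
    and adj: "\<And>x y. cinner (A (T x)) y = cinner (A x) (T' y)" using BA_adj[OF T] by blast
  define R where "R = (\<lambda>x. T' (T x))"
  have bR: "bounded_clinear_op R" unfolding R_def by (rule bco_comp[OF bT' bT])
  obtain KR where KR: "KR > 0" "\<forall>x. norm (R x) \<le> KR * norm x" using bco_bound[OF bR] by blast
  obtain CA where CA: "CA \<ge> 0" "\<forall>y. normA A y \<le> CA * norm y" using normA_le_norm[OF P] by blast
  have adjR: "cinner (A (R x)) y = cinner (A x) (R y)" for x y
  proof -
    have "cinner (A (R x)) y = cnj (cinner (A y) (T' (T x)))" unfolding R_def by (rule pA_commute[OF P])
    also have "\<dots> = cnj (cinner (A (T y)) (T x))" by (simp add: adj)
    also have "\<dots> = cinner (A (T x)) (T y)" by (rule pA_commute[OF P, symmetric])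
    also have "\<dots> = cinner (A x) (R y)" by (simp add: adj R_def)
    finally show ?thesis .
  qed
  have "normA A (T x) \<le> sqrt KR * normA A x" for x
  proof -
    define q where "q k = normA A ((R^^k) x)" for k
    have qn: "\<forall>k. q k \<ge> 0" by (simp add: q_def normA_nonneg[OF P])
    have nR: "norm ((R^^k) x) \<le> KR^k * norm x" for k
    proof (induction k)
      case 0 then show ?case by simp
    next
      case (Suc k)
      have "norm ((R^^Suc k) x) = norm (R ((R^^k) x))" by simp
      also have "\<dots> \<le> KR * norm ((R^^k) x)" using KR by blast
      also have "\<dots> \<le> KR * (KR^k * norm x)" using Suc KR by (simp add: mult_left_mono)
      finally show ?case by simp
    qed
    have bd: "\<forall>k. q k \<le> (CA * norm x) * KR^k"
    proof
      fix k
      have "q k \<le> CA * norm ((R^^k) x)" using CA by (simp add: q_def)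
      also have "\<dots> \<le> CA * (KR^k * norm x)" using nR CA by (simp add: mult_left_mono)
      finally show "q k \<le> (CA * norm x) * KR^k" by (simp add: algebra_simps)
    qed
    have lc: "\<forall>k. (q (Suc k))^2 \<le> q k * q (Suc (Suc k))"
    proof
      fix k
      have "(q (Suc k))^2 = Re (cinner (A (R ((R^^k) x))) (R ((R^^k) x)))"
        by (simp add: q_def normA_sq[OF P])
      also have "\<dots> = Re (cinner (A ((R^^k) x)) (R (R ((R^^k) x))))" by (simp add: adjR)
      also have "\<dots> \<le> cmod (cinner (A ((R^^k) x)) (R (R ((R^^k) x))))" by (rule complex_Re_le_cmod)
      also have "\<dots> \<le> q k * q (Suc (Suc k))" unfolding q_def using CS[OF P] by simp
      finally show "(q (Suc k))^2 \<le> q k * q (Suc (Suc k))" .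
    qed
    have T2: "(normA A (T x))^2 \<le> q 0 * q 1"
    proof -
      have "(normA A (T x))^2 = Re (cinner (A (T x)) (T x))" by (simp add: normA_sq[OF P])
      also have "\<dots> = Re (cinner (A x) (R x))" by (simp add: adj R_def)
      also have "\<dots> \<le> cmod (cinner (A x) (R x))" by (rule complex_Re_le_cmod)
      also have "\<dots> \<le> q 0 * q 1" unfolding q_def using CS[OF P] by simp
      finally show ?thesis .
    qed
    show ?thesis
    proof (cases "q 0 = 0")
      case True
      then have "(normA A (T x))^2 \<le> 0" using T2 by simp
      then have "normA A (T x) = 0" by simp
      then show ?thesis using True by (simp add: q_def)
    next
      case False
      then have q0: "q 0 > 0" using qn by (simp add: order_less_le)
      have "q 1 \<le> KR * q 0" by (rule growth[OF q0 qn lc KR(1) bd])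
      then have "(normA A (T x))^2 \<le> q 0 * (KR * q 0)" using T2 q0 by (meson order_trans mult_left_mono less_imp_le)
      also have "\<dots> = (sqrt KR * q 0)^2" using KR by (simp add: power2_eq_square)
      finally have "normA A (T x) \<le> sqrt KR * q 0"
        using q0 KR by (meson power2_le_imp_le mult_nonneg_nonneg real_sqrt_ge_zero less_imp_le)
      then show ?thesis by (simp add: q_def)
    qed
  qed
  then show ?thesis unfolding abdd_def by (meson real_sqrt_ge_zero KR(1) less_imp_le)
qed



lemma normA_scale:
  assumes P: "positive_op A"
  shows "normA A (c *\<^sub>C x) = cmod c * normA A x"
proof -
  have "cinner (A (c *\<^sub>C x)) (c *\<^sub>C x) = (c * cnj c) * cinner (A x) x"
    by (simp add: ip_scale_left[OF P] cinner_scaleC_right mult.assoc)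
  also have "\<dots> = complex_of_real ((cmod c)^2 * (normA A x)^2)"
    by (simp only: complex_norm_square[symmetric] cinner_self_normA[OF P] of_real_mult)
  finally have "Re (cinner (A (c *\<^sub>C x)) (c *\<^sub>C x)) = (cmod c * normA A x)^2"
    by (simp add: power_mult_distrib)
  then show ?thesis unfolding normA_def[of A "c *\<^sub>C x"]
    using normA_nonneg[OF P, of x] by simp
qed

lemma nA_add_sq:
  assumes P: "positive_op A"
  shows "(normA A (a + b))^2 = (normA A a)^2 + (normA A b)^2 + 2 * Re (cinner (A a) b)"
proof -
  have "cinner (A (a + b)) (a + b) = cinner (A a) a + cinner (A b) b + (cinner (A a) b + cnj (cinner (A a) b))"
    by (simp add: ip_add_left[OF P] cinner_add_right pA_commute[OF P, of b a])
  then show ?thesis by (simp add: normA_sq[OF P])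
qed

lemma nA_diff_sq:
  assumes P: "positive_op A"
  shows "(normA A (a - b))^2 = (normA A a)^2 + (normA A b)^2 - 2 * Re (cinner (A a) b)"
proof -
  have "cinner (A (a - b)) (a - b) = cinner (A a) a + cinner (A b) b - (cinner (A a) b + cnj (cinner (A a) b))"
    by (simp add: ip_diff_left[OF P] cinner_diff_right pA_commute[OF P, of b a])
  then show ?thesis by (simp add: normA_sq[OF P])
qed

lemma unit_exists:
  assumes P: "positive_op A" and nz: "A \<noteq> (\<lambda>x. 0)"
  shows "\<exists>x. normA A x = 1"
proof (rule ccontr)
  assume no: "\<not> (\<exists>x. normA A x = 1)"
  have z: "normA A x = 0" for x
  proof (rule ccontr)
    assume "normA A x \<noteq> 0"
    then have p: "normA A x > 0" using normA_nonneg[OF P, of x] by simp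
    have "normA A (complex_of_real (1 / normA A x) *\<^sub>C x) = 1"
      using p by (simp add: normA_scale[OF P] norm_divide)
    then show False using no by blast
  qed
  have "A y = 0" for y
  proof -
    have "cmod (cinner (A y) (A y)) \<le> normA A y * normA A (A y)" by (rule CS[OF P])
    then have "cinner (A y) (A y) = 0" using z[of y] by simp
    then show ?thesis by (simp add: cinner_eq_zero_iff)
  qed
  then have "A = (\<lambda>x. 0)" by (rule ext)
  then show False using nz by simp
qed

lemma opnorm_bound:
  assumes P: "positive_op A" and ab: "abdd A T" and bT: "bounded_clinear_op T"
    and ex: "\<exists>x. normA A x = 1"
  shows "normA A (T x) \<le> opnormA A T * normA A x" and "opnormA A T \<ge> 0"
proof -
  define M where "M = {normA A (T x) |x. normA A x = 1}"
  obtain K where K: "K \<ge> 0" "\<forall>x. normA A (T x) \<le> K * normA A x" using ab unfolding abdd_def by blast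
  have bdd: "bdd_above M"
  proof (rule bdd_aboveI[where M=K])
    fix m assume "m \<in> M"
    then obtain x where "m = normA A (T x)" "normA A x = 1" unfolding M_def by blast
    then show "m \<le> K" using K by (metis mult_1_right)
  qed
  obtain x0 where x0: "normA A x0 = 1" using ex by blast
  have "normA A (T x0) \<in> M" unfolding M_def using x0 by blast
  then have "normA A (T x0) \<le> Sup M" using bdd by (rule cSup_upper)
  then show sp: "opnormA A T \<ge> 0" unfolding opnormA_def M_def[symmetric]
    using normA_nonneg[OF P, of "T x0"] by linarith
  show "normA A (T x) \<le> opnormA A T * normA A x"
  proof (cases "normA A x = 0")
    case True
    then have "normA A (T x) \<le> 0" using K by (metis mult_zero_right)
    then show ?thesis using True by simp
  next
    case False
    then have p: "normA A x > 0" using normA_nonneg[OF P, of x] by simp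
    define y where "y = complex_of_real (1 / normA A x) *\<^sub>C x"
    have y1: "normA A y = 1" using p by (simp add: y_def normA_scale[OF P] norm_divide)
    have "normA A (T y) = normA A (T x) / normA A x"
      using p by (simp add: y_def bco_scale[OF bT] normA_scale[OF P] norm_divide)
    moreover have "normA A (T y) \<in> M" unfolding M_def using y1 by blast
    then have "normA A (T y) \<le> Sup M" using bdd by (rule cSup_upper)
    ultimately have "normA A (T x) / normA A x \<le> opnormA A T" by (simp add: opnormA_def M_def)
    then show ?thesis using p by (simp add: divide_le_eq)
  qed
qed

lemma omega_bound:
  assumes P: "positive_op A" and ab: "abdd A T" and bT: "bounded_clinear_op T"
    and ex: "\<exists>x. normA A x = 1"
  shows "cmod (cinner (A (T x)) x) \<le> omegaA A T * (normA A x)^2" and "omegaA A T \<ge> 0"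
proof -
  define M where "M = {cmod (cinner (A (T x)) x) |x. normA A x = 1}"
  obtain K where K: "K \<ge> 0" "\<forall>x. normA A (T x) \<le> K * normA A x" using ab unfolding abdd_def by blast
  have "cmod (cinner (A (T x)) x) \<le> K" if "normA A x = 1" for x
  proof -
    have "cmod (cinner (A (T x)) x) \<le> normA A (T x) * normA A x" by (rule CS[OF P])
    also have "\<dots> \<le> K" using K(2)[rule_format, of x] that by simp
    finally show ?thesis .
  qed
  then have bdd: "bdd_above M"
    by (intro bdd_aboveI[where M=K]) (auto simp: M_def)
  obtain x0 where x0: "normA A x0 = 1" using ex by blast
  have "cmod (cinner (A (T x0)) x0) \<in> M" unfolding M_def using x0 by blast
  then have "cmod (cinner (A (T x0)) x0) \<le> Sup M" using bdd by (rule cSup_upper)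
  then show sp: "omegaA A T \<ge> 0" unfolding omegaA_def M_def[symmetric]
    using norm_ge_zero[of "cinner (A (T x0)) x0"] by linarith
  show "cmod (cinner (A (T x)) x) \<le> omegaA A T * (normA A x)^2"
  proof (cases "normA A x = 0")
    case True
    have "cmod (cinner (A (T x)) x) \<le> normA A (T x) * normA A x" by (rule CS[OF P])
    then show ?thesis using True by simp
  next
    case False
    then have p: "normA A x > 0" using normA_nonneg[OF P, of x] by simp
    define r where "r = 1 / normA A x"
    define y where "y = complex_of_real r *\<^sub>C x"
    have y1: "normA A y = 1" using p by (simp add: y_def r_def normA_scale[OF P] norm_divide)
    have "cinner (A (T y)) y = complex_of_real (r * r) * cinner (A (T x)) x"
      by (simp add: y_def bco_scale[OF bT] ip_scale_left[OF P] cinner_scaleC_right)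
    then have "cmod (cinner (A (T y)) y) = cmod (cinner (A (T x)) x) / (normA A x)^2"
      using p by (simp add: r_def norm_mult norm_divide power2_eq_square)
    moreover have "cmod (cinner (A (T y)) y) \<in> M" unfolding M_def using y1 by blast
    then have "cmod (cinner (A (T y)) y) \<le> Sup M" using bdd by (rule cSup_upper)
    ultimately have "cmod (cinner (A (T x)) x) / (normA A x)^2 \<le> omegaA A T" by (simp add: omegaA_def M_def)
    then show ?thesis using p by (simp add: divide_le_eq)
  qed
qed

lemma adj_bound:
  assumes P: "positive_op A"
    and adj: "\<And>y z. cinner (A (T y)) z = cinner (A y) (T' z)"
    and hT: "\<And>y. normA A (T y) \<le> nT * normA A y" and nT: "nT \<ge> 0"
  shows "normA A (T' u) \<le> nT * normA A u"
proof -
  have "(normA A (T' u))^2 = Re (cinner (A (T' u)) (T' u))" by (rule normA_sq[OF P])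
  also have "\<dots> = Re (cinner (A (T (T' u))) u)" by (simp add: adj)
  also have "\<dots> \<le> cmod (cinner (A (T (T' u))) u)" by (rule complex_Re_le_cmod)
  also have "\<dots> \<le> normA A (T (T' u)) * normA A u" by (rule CS[OF P])
  also have "\<dots> \<le> (nT * normA A (T' u)) * normA A u"
    using hT normA_nonneg[OF P, of u] by (simp add: mult_right_mono)
  finally have H: "normA A (T' u) * normA A (T' u) \<le> normA A (T' u) * (nT * normA A u)"
    by (simp add: power2_eq_square algebra_simps)
  show ?thesis
  proof (cases "normA A (T' u) = 0")
    case True then show ?thesis using nT normA_nonneg[OF P, of u] by simp
  next
    case False
    then have "normA A (T' u) > 0" using normA_nonneg[OF P, of "T' u"] by simp
    then show ?thesis using H by (simp add: mult_le_cancel_left_pos)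
  qed
qed

lemma abdd_comp:
  assumes P: "positive_op A" and "abdd A T" "abdd A S"
  shows "abdd A (T \<circ> S)"
proof -
  obtain K1 where K1: "K1 \<ge> 0" "\<forall>x. normA A (T x) \<le> K1 * normA A x" using assms unfolding abdd_def by blast
  obtain K2 where K2: "K2 \<ge> 0" "\<forall>x. normA A (S x) \<le> K2 * normA A x" using assms unfolding abdd_def by blast
  have "normA A (T (S x)) \<le> (K1 * K2) * normA A x" for x
  proof -
    have "normA A (T (S x)) \<le> K1 * normA A (S x)" using K1 by blast
    also have "\<dots> \<le> K1 * (K2 * normA A x)" using K1 K2 by (simp add: mult_left_mono)
    finally show ?thesis by (simp add: mult.assoc)
  qed
  then show ?thesis unfolding abdd_def using K1 K2 by (metis comp_apply mult_nonneg_nonneg)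
qed



lemma unit_phase: "\<exists>om. cmod om = 1 \<and> om * c = complex_of_real (cmod c)"
proof (cases "c = 0")
  case True then show ?thesis by (intro exI[of _ 1]) simp
next
  case False
  then have p: "cmod c > 0" by simp
  have "cmod (cnj c / complex_of_real (cmod c)) = 1" using p by (simp add: norm_divide)
  moreover have "cnj c / complex_of_real (cmod c) * c = complex_of_real (cmod c)"
  proof -
    have "cnj c / complex_of_real (cmod c) * c = (c * cnj c) / complex_of_real (cmod c)" by (simp add: field_simps)
    also have "\<dots> = complex_of_real ((cmod c)^2) / complex_of_real (cmod c)" by (simp only: complex_norm_square)
    also have "\<dots> = complex_of_real (cmod c)" using p by (simp add: power2_eq_square)
    finally show ?thesis .
  qed
  ultimately show ?thesis by blast
qed

lemma main_pt:
  fixes A T S T' S' :: "'a::complex_inner \<Rightarrow> 'a" and x :: 'a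
  assumes P: "positive_op A"
    and adjT: "\<And>y z. cinner (A (T y)) z = cinner (A y) (T' z)"
    and adjS: "\<And>y z. cinner (A (S y)) z = cinner (A y) (S' z)"
    and hT': "\<And>y. normA A (T' y) \<le> nT * normA A y"
    and hS: "\<And>y. normA A (S y) \<le> nS * normA A y"
    and hTS: "\<And>y. normA A (T (S y)) \<le> nTS * normA A y"
    and hST: "\<And>y. cmod (cinner (A (S (T y))) y) \<le> w * (normA A y)^2"
    and pT: "nT > 0" and pS: "nS > 0" and pTS: "nTS \<ge> 0" and pw: "w \<ge> 0"
    and x1: "normA A x = 1"
  shows "cmod (cinner (A (T (S x))) x) \<le> w/2 + (nT*nS + nTS)/4"
proof -
  note n0 = normA_nonneg[OF P]
  define c where "c = cinner (A (T (S x))) x"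
  obtain om where om1: "cmod om = 1" and omc: "om * c = complex_of_real (cmod c)"
    using unit_phase by blast
  define t where "t = sqrt (nS / nT)"
  have tp: "t > 0" using pT pS by (simp add: t_def)
  have t2: "t^2 = nS / nT" using pT pS by (simp add: t_def)
  have tnz: "complex_of_real t \<noteq> 0" using tp by simp
  define a where "a = (om * complex_of_real (1/t)) *\<^sub>C S x"
  define b where "b = complex_of_real t *\<^sub>C T' x"
  define z where "z = a + b"
  have ab: "cinner (A a) b = complex_of_real (cmod c)"
  proof -
    have "cinner (A a) b = om * complex_of_real (1/t) * (complex_of_real t * cinner (A (S x)) (T' x))"
      by (simp add: a_def b_def ip_scale_left[OF P] cinner_scaleC_right)
    also have "cinner (A (S x)) (T' x) = c" by (simp add: c_def adjT)
    finally have "cinner (A a) b = om * c * (complex_of_real (1/t) * complex_of_real t)"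
      by (simp only: mult_ac)
    also have "complex_of_real (1/t) * complex_of_real t = 1" using tp
      by (simp flip: of_real_mult)
    finally show ?thesis using omc by simp
  qed
  have four: "4 * cmod c \<le> (normA A z)^2"
  proof -
    have e1: "(normA A z)^2 = (normA A a)^2 + (normA A b)^2 + 2 * cmod c"
      unfolding z_def using nA_add_sq[OF P, of a b] ab by simp
    have e2: "(normA A (a - b))^2 = (normA A a)^2 + (normA A b)^2 - 2 * cmod c"
      using nA_diff_sq[OF P, of a b] ab by simp
    have "0 \<le> (normA A (a - b))^2" by simp
    then show ?thesis using e1 e2 by linarith
  qed
  define u where "u = complex_of_real t *\<^sub>C T z"
  define v where "v = (cnj om * complex_of_real (1/t)) *\<^sub>C S' z"
  define wv where "wv = v + u"
  have zz: "cinner (A z) z = cinner (A wv) x"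
  proof -
    have "cinner (A z) z = cinner (A z) (a + b)" by (simp only: z_def[symmetric])
    also have "\<dots> = cinner (A z) a + cinner (A z) b" by (rule cinner_add_right)
    also have "cinner (A z) a = cnj (om * complex_of_real (1/t)) * cinner (A z) (S x)"
      by (simp only: a_def cinner_scaleC_right)
    also have "cinner (A z) (S x) = cnj (cinner (A (S x)) z)" by (rule pA_commute[OF P])
    also have "cinner (A (S x)) z = cinner (A x) (S' z)" by (rule adjS)
    also have "cnj (cinner (A x) (S' z)) = cinner (A (S' z)) x" by (rule pA_commute[OF P, symmetric])
    also have "cinner (A z) b = complex_of_real t * cinner (A z) (T' x)"
      by (simp add: b_def cinner_scaleC_right)
    also have "cinner (A z) (T' x) = cinner (A (T z)) x" by (rule adjT[symmetric])
    finally have L: "cinner (A z) z = cnj om * complex_of_real (1/t) * cinner (A (S' z)) x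
        + complex_of_real t * cinner (A (T z)) x" by simp
    have R: "cinner (A wv) x = cnj om * complex_of_real (1/t) * cinner (A (S' z)) x
        + complex_of_real t * cinner (A (T z)) x"
      by (simp only: wv_def u_def v_def ip_add_left[OF P] ip_scale_left[OF P])
    show ?thesis using L R by simp
  qed
  have nz: "(normA A z)^2 \<le> normA A wv"
  proof -
    have "(normA A z)^2 = Re (cinner (A wv) x)" by (simp add: normA_sq[OF P] zz)
    also have "\<dots> \<le> cmod (cinner (A wv) x)" by (rule complex_Re_le_cmod)
    also have "\<dots> \<le> normA A wv * normA A x" by (rule CS[OF P])
    finally show ?thesis using x1 by simp
  qed
  have vu: "Re (cinner (A v) u) \<le> w * (normA A z)^2"
  proof -
    have "cinner (A v) u = cnj om * complex_of_real (1/t) * (complex_of_real t * cinner (A (S' z)) (T z))"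
      by (simp add: v_def u_def ip_scale_left[OF P] cinner_scaleC_right)
    also have "\<dots> = cnj om * cinner (A (S' z)) (T z) * (complex_of_real (1/t) * complex_of_real t)"
      by (simp only: mult_ac)
    also have "complex_of_real (1/t) * complex_of_real t = 1" using tp
      by (simp flip: of_real_mult)
    also have "cinner (A (S' z)) (T z) = cnj (cinner (A (T z)) (S' z))" by (rule pA_commute[OF P])
    also have "cinner (A (T z)) (S' z) = cinner (A (S (T z))) z" by (rule adjS[symmetric])
    finally have "cinner (A v) u = cnj om * cnj (cinner (A (S (T z))) z)" by simp
    then have "cmod (cinner (A v) u) = cmod (cinner (A (S (T z))) z)" using om1 by (simp add: norm_mult)
    then have "cmod (cinner (A v) u) \<le> w * (normA A z)^2" using hST by simp
    then show ?thesis using complex_Re_le_cmod order_trans by blast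
  qed
  define N where "N = (normA A u)^2 + (normA A v)^2"
  define M where "M = nT*nS + nTS"
  have Mp: "M \<ge> 0" using pT pS pTS by (simp add: M_def)
  have Np: "N \<ge> 0" by (simp add: N_def)
  have NM: "N \<le> M * (normA A z)^2"
  proof -
    define g1 where "g1 = complex_of_real t *\<^sub>C T' u"
    define g2 where "g2 = (om * complex_of_real (1/t)) *\<^sub>C S v"
    define g where "g = g1 + g2"
    have uu: "cinner (A u) u = complex_of_real t * cinner (A z) (T' u)"
    proof -
      have "cinner (A u) u = cinner (A (complex_of_real t *\<^sub>C T z)) u" by (simp only: u_def)
      also have "\<dots> = complex_of_real t * cinner (A (T z)) u" by (rule ip_scale_left[OF P])
      also have "cinner (A (T z)) u = cinner (A z) (T' u)" by (rule adjT)
      finally show ?thesis .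
    qed
    have vv: "cinner (A v) v = cnj om * complex_of_real (1/t) * cinner (A z) (S v)"
    proof -
      have "cinner (A v) v = cinner (A ((cnj om * complex_of_real (1/t)) *\<^sub>C S' z)) v" by (simp only: v_def)
      also have "\<dots> = (cnj om * complex_of_real (1/t)) * cinner (A (S' z)) v" by (rule ip_scale_left[OF P])
      also have "cinner (A (S' z)) v = cnj (cinner (A v) (S' z))" by (rule pA_commute[OF P])
      also have "cinner (A v) (S' z) = cinner (A (S v)) z" by (rule adjS[symmetric])
      also have "cnj (cinner (A (S v)) z) = cinner (A z) (S v)" by (rule pA_commute[OF P, symmetric])
      finally show ?thesis .
    qed
    have zg: "cinner (A z) g = cinner (A u) u + cinner (A v) v"
      by (simp add: uu vv g_def g1_def g2_def cinner_add_right cinner_scaleC_right)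
    have "N = Re (cinner (A z) g)" by (simp add: N_def normA_sq[OF P] zg)
    also have "\<dots> \<le> cmod (cinner (A z) g)" by (rule complex_Re_le_cmod)
    also have "\<dots> \<le> normA A z * normA A g" by (rule CS[OF P])
    finally have Ng: "N \<le> normA A z * normA A g" .
    have g1n: "normA A g1 \<le> t * nT * normA A u"
      using hT'[of u] tp by (simp add: g1_def normA_scale[OF P] mult.assoc mult_left_mono)
    have g2n: "normA A g2 \<le> (1/t) * nS * normA A v"
      using hS[of v] tp om1 by (simp add: g2_def normA_scale[OF P] norm_mult norm_divide divide_right_mono)
    have g12: "Re (cinner (A g1) g2) \<le> nTS * normA A u * normA A v"
    proof -
      have "cinner (A g1) g2 = complex_of_real t * (cnj om * complex_of_real (1/t)) * cinner (A (T' u)) (S v)"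
        by (simp add: g1_def g2_def ip_scale_left[OF P] cinner_scaleC_right mult.assoc)
      also have "\<dots> = cnj om * cinner (A (T' u)) (S v) * (complex_of_real (1/t) * complex_of_real t)"
        by (simp only: mult_ac)
      also have "complex_of_real (1/t) * complex_of_real t = 1" using tp
        by (simp flip: of_real_mult)
      also have "cinner (A (T' u)) (S v) = cnj (cinner (A (S v)) (T' u))" by (rule pA_commute[OF P])
      also have "cinner (A (S v)) (T' u) = cinner (A (T (S v))) u" by (rule adjT[symmetric])
      finally have "cinner (A g1) g2 = cnj om * cnj (cinner (A (T (S v))) u)" by simp
      then have "cmod (cinner (A g1) g2) = cmod (cinner (A (T (S v))) u)" using om1 by (simp add: norm_mult)
      also have "\<dots> \<le> normA A (T (S v)) * normA A u" by (rule CS[OF P])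
      also have "\<dots> \<le> (nTS * normA A v) * normA A u" using hTS[of v] n0[of u] by (simp add: mult_right_mono)
      finally show ?thesis using complex_Re_le_cmod[of "cinner (A g1) g2"] by (simp add: algebra_simps)
    qed
    have gsq: "(normA A g)^2 \<le> M * N"
    proof -
      have "(normA A g)^2 = (normA A g1)^2 + (normA A g2)^2 + 2 * Re (cinner (A g1) g2)"
        unfolding g_def by (rule nA_add_sq[OF P])
      also have "(normA A g1)^2 \<le> (t * nT * normA A u)^2"
        using g1n n0[of g1] by (simp add: power_mono)
      also have "(normA A g2)^2 \<le> ((1/t) * nS * normA A v)^2"
        using g2n n0[of g2] by (simp add: power_mono)
      also have "(t * nT * normA A u)^2 = (t^2 * nT^2) * (normA A u)^2" by (simp add: power_mult_distrib)
      also have "t^2 * nT^2 = nS * nT" using t2 pT by (simp add: power2_eq_square field_simps)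
      also have "((1/t) * nS * normA A v)^2 = (nS^2 / t^2) * (normA A v)^2" by (simp add: power_mult_distrib power_divide)
      also have "nS^2 / t^2 = nS * nT" unfolding t2 using pT pS by (simp add: power2_eq_square field_simps)
      finally have "(normA A g)^2 \<le> nS * nT * (normA A u)^2 + nS * nT * (normA A v)^2 + 2 * (nTS * normA A u * normA A v)"
        using g12 by linarith
      moreover have "2 * (nTS * normA A u * normA A v) \<le> nTS * ((normA A u)^2 + (normA A v)^2)"
      proof -
        have "2 * (normA A u * normA A v) \<le> (normA A u)^2 + (normA A v)^2"
          using sum_squares_bound[of "normA A u" "normA A v"] by (simp add: power2_eq_square)
        from mult_left_mono[OF this pTS] show ?thesis by (simp add: algebra_simps)
      qed
      ultimately show ?thesis unfolding M_def N_def by (simp add: algebra_simps)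
    qed
    show ?thesis
    proof (cases "N = 0")
      case True then show ?thesis using Mp by simp
    next
      case False
      then have Npos: "N > 0" using Np by simp
      have "N * N \<le> (normA A z * normA A g) * (normA A z * normA A g)"
        by (rule mult_mono[OF Ng Ng _ Np]) (simp add: n0)
      also have "\<dots> = (normA A z * normA A g)^2" by (simp add: power2_eq_square)
      also have "\<dots> = (normA A z)^2 * (normA A g)^2" by (simp add: power_mult_distrib)
      also have "\<dots> \<le> (normA A z)^2 * (M * N)" using gsq by (simp add: mult_left_mono)
      finally have "N * N \<le> N * (M * (normA A z)^2)" by (simp add: algebra_simps)
      then show ?thesis using Npos by (simp add: mult_le_cancel_left_pos)
    qed
  qed
  have nwv: "(normA A wv)^2 \<le> (M + 2 * w) * (normA A z)^2"
  proof -
    have "(normA A wv)^2 = (normA A v)^2 + (normA A u)^2 + 2 * Re (cinner (A v) u)"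
      unfolding wv_def by (rule nA_add_sq[OF P])
    also have "\<dots> \<le> N + 2 * (w * (normA A z)^2)" using vu by (simp add: N_def)
    also have "\<dots> \<le> M * (normA A z)^2 + 2 * (w * (normA A z)^2)" using NM by simp
    finally show ?thesis by (simp add: algebra_simps)
  qed
  have zb: "(normA A z)^2 \<le> M + 2 * w"
  proof (cases "normA A z = 0")
    case True then show ?thesis using Mp pw by simp
  next
    case False
    then have zp: "(normA A z)^2 > 0" using n0[of z] by simp
    have "(normA A z)^2 * (normA A z)^2 \<le> (normA A wv)^2"
      using mult_mono[OF nz nz n0[of wv]] zp by (simp add: power2_eq_square)
    also have "\<dots> \<le> (M + 2 * w) * (normA A z)^2" by (rule nwv)
    finally have "(normA A z)^2 * (normA A z)^2 \<le> (M + 2 * w) * (normA A z)^2" .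
    then show ?thesis by (rule mult_right_le_imp_le[OF _ zp])
  qed
  have "4 * cmod c \<le> M + 2 * w" using four zb by linarith
  then have "cmod c \<le> w/2 + M/4" by linarith
  then show ?thesis unfolding c_def M_def .
qed



theorem theorem2p6:
  fixes A T S :: "'a::chilbert \<Rightarrow> 'a"
  assumes "positive_op A" and "A \<noteq> (\<lambda>x. 0)"
    and "T \<in> BA A" and "S \<in> BA A"
  shows "omegaA A (T \<circ> S) \<le> 1/2 * omegaA A (S \<circ> T)
           + 1/4 * (opnormA A T * opnormA A S + opnormA A (T \<circ> S))"
proof -
  note P = assms(1)
  have ex: "\<exists>x. normA A x = 1" by (rule unit_exists[OF P assms(2)])
  obtain T' where bT: "bounded_clinear_op T" and bT': "bounded_clinear_op T'"
    and adjT: "\<And>x y. cinner (A (T x)) y = cinner (A x) (T' y)" using BA_adj[OF assms(3)] by blast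
  obtain S' where bS: "bounded_clinear_op S" and bS': "bounded_clinear_op S'"
    and adjS: "\<And>x y. cinner (A (S x)) y = cinner (A x) (S' y)" using BA_adj[OF assms(4)] by blast
  have aT: "abdd A T" by (rule Abound[OF P assms(3)])
  have aS: "abdd A S" by (rule Abound[OF P assms(4)])
  have aTS: "abdd A (T \<circ> S)" by (rule abdd_comp[OF P aT aS])
  have aST: "abdd A (S \<circ> T)" by (rule abdd_comp[OF P aS aT])
  have bTS: "bounded_clinear_op (T \<circ> S)" by (rule bco_comp'[OF bT bS])
  have bST: "bounded_clinear_op (S \<circ> T)" by (rule bco_comp'[OF bS bT])
  define nT where "nT = opnormA A T"
  define nS where "nS = opnormA A S"
  define nTS where "nTS = opnormA A (T \<circ> S)"
  define w where "w = omegaA A (S \<circ> T)"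
  have hT: "\<And>y. normA A (T y) \<le> nT * normA A y" and nT0: "nT \<ge> 0"
    unfolding nT_def using opnorm_bound[OF P aT bT ex] by auto
  have hS: "\<And>y. normA A (S y) \<le> nS * normA A y" and nS0: "nS \<ge> 0"
    unfolding nS_def using opnorm_bound[OF P aS bS ex] by auto
  have hTS: "\<And>y. normA A (T (S y)) \<le> nTS * normA A y" and nTS0: "nTS \<ge> 0"
    unfolding nTS_def using opnorm_bound[OF P aTS bTS ex] by auto
  have hST: "\<And>y. cmod (cinner (A (S (T y))) y) \<le> w * (normA A y)^2" and w0: "w \<ge> 0"
    unfolding w_def using omega_bound[OF P aST bST ex] by auto
  have hT': "\<And>y. normA A (T' y) \<le> nT * normA A y" by (rule adj_bound[OF P adjT hT nT0])
  have pt: "cmod (cinner (A (T (S x))) x) \<le> w/2 + (nT*nS + nTS)/4" if x1: "normA A x = 1" for x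
  proof (cases "nT > 0 \<and> nS > 0")
    case True
    then show ?thesis using main_pt[OF P adjT adjS hT' hS hTS hST _ _ nTS0 w0 x1] by blast
  next
    case False
    then have z: "nT * nS = 0" using nT0 nS0 by auto
    have "cmod (cinner (A (T (S x))) x) \<le> normA A (T (S x)) * normA A x" by (rule CS[OF P])
    also have "\<dots> = normA A (T (S x))" using x1 by simp
    also have "\<dots> \<le> nT * normA A (S x)" by (rule hT)
    also have "\<dots> \<le> nT * (nS * normA A x)" using hS nT0 by (simp add: mult_left_mono)
    also have "\<dots> = 0" using z x1 by simp
    finally show ?thesis using w0 nTS0 nT0 nS0 by simp
  qed
  have "omegaA A (T \<circ> S) \<le> w/2 + (nT*nS + nTS)/4"
    unfolding omegaA_def
  proof (rule cSup_least)
    show "{cmod (cinner (A ((T \<circ> S) x)) x) |x. normA A x = 1} \<noteq> {}" using ex by blast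
  next
    fix m assume "m \<in> {cmod (cinner (A ((T \<circ> S) x)) x) |x. normA A x = 1}"
    then obtain x where "m = cmod (cinner (A (T (S x))) x)" "normA A x = 1" by auto
    then show "m \<le> w/2 + (nT*nS + nTS)/4" using pt by simp
  qed
  then show ?thesis unfolding w_def nT_def nS_def nTS_def by simp
qed


end
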